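(* Let $z$ be a perfect element of $D^{2,2,2}$, let $i\neq j$ in $\{1,2,3\}$, and let $u\in D^{2,2,2}$. Suppose that for every indecomposable representation $\rho$, $$\varphi_i(\Phi^+\rho(z))+\varphi_j(\Phi^+\rho(z))=\rho(u).$$ Then $u$ is perfect.
   Context: $D^{2,2,2}$ is the modular lattice generated by $x_1,y_1,x_2,y_2,x_3,y_3$ subject only to $x_i\subseteq y_i$ ($i=1,2,3$), with a greatest element $I$ adjoined. Meet is written $ab$, join $a+b$. A representation $\rho$ of $D^{2,2,2}$ in a finite-dimensional vector space $X_0$ is a lattice morphism from $D^{2,2,2}$ to the subspace lattice of $X_0$, with $\rho(I)=X_0$. Write $X_i=\rho(x_i)\subseteq Y_i=\rho(y_i)$. $\rho$ is indecomposable if $X_0\neq0$ and there is no decomposition $X_0=X'\oplus X''$ with $X',X''\neq0$ and $\rho(a)=(\rho(a)\cap X')+(\rho(a)\cap X'')$ for all $a$. An element $a$ is perfect if $\rho(a)\in\{0,X_0\}$ for every indecomposable $\rho$. Put $R=Y_1\oplus Y_2\oplus Y_3$ and $X^1_0=\{(\eta_1,\eta_2,\eta_3)\in R:\sum\eta_i=0\}$. Let $G'_i\subseteq R$ be the triples with $i$-th coordinate in $X_i$, and $H'_i\subseteq R$ the triples with $i$-th coordinate $0$. $\Phi^+\rho$ is the representation in $X^1_0$ with $\Phi^+\rho(y_i)=G'_i\cap X^1_0$, $\Phi^+\rho(x_i)=H'_i\cap X^1_0$, $\Phi^+\rho(I)=X^1_0$. The elementary map $\varphi_i:X^1_0\to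 X_0$ is $(\eta_1,\eta_2,\eta_3)\mapsto\eta_i$; $\varphi_i(S)$ denotes the image of a subspace $S$. *)

theory Defs
  imports Main "HOL-Library.Function_Algebras"
begin

datatype idx = I1 | I2 | I3

text \<open>Lattice terms over the generators x_i, y_i and the adjoined top I.
  Every element of D^{2,2,2} is the value of such a term; a representation
  is determined by the images of the generators (freeness of D^{2,2,2} as a
  modular lattice with the relations x_i <= y_i), and its value on a term is
  computed below.\<close>
datatype lterm = GX idx | GY idx | TopI | Meet lterm lterm | Join lterm lterm

definition ssum :: "'v::ab_group_add set \<Rightarrow> 'v set \<Rightarrow> 'v set" where
  "ssum A B = {a + b | a b. a \<in> A \<and> b \<in> B}"

fun evalL :: "'v::ab_group_add set \<Rightarrow> (idx \<Rightarrow> 'v set) \<Rightarrow> (idx \<Rightarrow> 'v set) \<Rightarrow> lterm \<Rightarrow> 'v set" where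
  "evalL X0 Xs Ys (GX i) = Xs i"
| "evalL X0 Xs Ys (GY i) = Ys i"
| "evalL X0 Xs Ys TopI = X0"
| "evalL X0 Xs Ys (Meet a b) = evalL X0 Xs Ys a \<inter> evalL X0 Xs Ys b"
| "evalL X0 Xs Ys (Join a b) = ssum (evalL X0 Xs Ys a) (evalL X0 Xs Ys b)"

text \<open>Ambient vector space: K-valued sequences (nat => 'k), K a field.\<close>
definition subspaceK :: "(nat \<Rightarrow> 'k::field) set \<Rightarrow> bool" where
  "subspaceK S \<longleftrightarrow> 0 \<in> S \<and> (\<forall>v\<in>S. \<forall>w\<in>S. v + w \<in> S)
      \<and> (\<forall>c. \<forall>v\<in>S. (\<lambda>n. c * v n) \<in> S)"

definition findimK :: "(nat \<Rightarrow> 'k::field) set \<Rightarrow> bool" where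
  "findimK S \<longleftrightarrow> (\<exists>N. \<forall>v\<in>S. \<forall>n\<ge>N. v n = 0)"

definition is_rep :: "(nat \<Rightarrow> 'k::field) set \<Rightarrow> (idx \<Rightarrow> (nat \<Rightarrow> 'k) set) \<Rightarrow> (idx \<Rightarrow> (nat \<Rightarrow> 'k) set) \<Rightarrow> bool" where
  "is_rep X0 Xs Ys \<longleftrightarrow> subspaceK X0 \<and> findimK X0 \<and>
     (\<forall>i. subspaceK (Xs i) \<and> subspaceK (Ys i) \<and> Xs i \<subseteq> Ys i \<and> Ys i \<subseteq> X0)"

definition indecomposable :: "(nat \<Rightarrow> 'k::field) set \<Rightarrow> (idx \<Rightarrow> (nat \<Rightarrow> 'k) set) \<Rightarrow> (idx \<Rightarrow> (nat \<Rightarrow> 'k) set) \<Rightarrow> bool" where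
  "indecomposable X0 Xs Ys \<longleftrightarrow> is_rep X0 Xs Ys \<and> X0 \<noteq> {0} \<and>
     \<not> (\<exists>X' X''. subspaceK X' \<and> subspaceK X'' \<and> X' \<noteq> {0} \<and> X'' \<noteq> {0} \<and>
          X' \<inter> X'' = {0} \<and> ssum X' X'' = X0 \<and>
          (\<forall>a. evalL X0 Xs Ys a = ssum (evalL X0 Xs Ys a \<inter> X') (evalL X0 Xs Ys a \<inter> X'')))"

definition perfect :: "'k::field itself \<Rightarrow> lterm \<Rightarrow> bool" where
  "perfect _ a \<longleftrightarrow> (\<forall>(X0::(nat \<Rightarrow> 'k) set) Xs Ys. indecomposable X0 Xs Ys \<longrightarrow>
       evalL X0 Xs Ys a = {0} \<or> evalL X0 Xs Ys a = X0)"

text \<open>The functor Phi^+: space X_0^1 inside R = Y_1 (+) Y_2 (+) Y_3,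
  triples represented as functions idx => vector.\<close>
definition Rsp :: "(idx \<Rightarrow> 'v::ab_group_add set) \<Rightarrow> (idx \<Rightarrow> 'v) set" where
  "Rsp Ys = {\<eta>. \<forall>i. \<eta> i \<in> Ys i}"

definition PhiX0 :: "(idx \<Rightarrow> 'v::ab_group_add set) \<Rightarrow> (idx \<Rightarrow> 'v) set" where
  "PhiX0 Ys = {\<eta> \<in> Rsp Ys. \<eta> I1 + \<eta> I2 + \<eta> I3 = 0}"

definition Gp :: "(idx \<Rightarrow> 'v::ab_group_add set) \<Rightarrow> (idx \<Rightarrow> 'v set) \<Rightarrow> idx \<Rightarrow> (idx \<Rightarrow> 'v) set" where
  "Gp Xs Ys i = {\<eta> \<in> Rsp Ys. \<eta> i \<in> Xs i}"

definition Hp :: "(idx \<Rightarrow> 'v::ab_group_add set) \<Rightarrow> idx \<Rightarrow> (idx \<Rightarrow> 'v) set" where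
  "Hp Ys i = {\<eta> \<in> Rsp Ys. \<eta> i = 0}"

definition evalPhiPlus :: "(idx \<Rightarrow> 'v::ab_group_add set) \<Rightarrow> (idx \<Rightarrow> 'v set) \<Rightarrow> lterm \<Rightarrow> (idx \<Rightarrow> 'v) set" where
  "evalPhiPlus Xs Ys a = evalL (PhiX0 Ys) (\<lambda>i. Hp Ys i \<inter> PhiX0 Ys) (\<lambda>i. Gp Xs Ys i \<inter> PhiX0 Ys) a"

definition phiMap :: "idx \<Rightarrow> (idx \<Rightarrow> 'v) set \<Rightarrow> 'v set" where
  "phiMap i S = (\<lambda>\<eta>. \<eta> i) ` S"

end

theory Submission
  imports Defs
begin

definition sc :: "'k::field \<Rightarrow> (nat \<Rightarrow> 'k) \<Rightarrow> (nat \<Rightarrow> 'k)" where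
  "sc c v = (\<lambda>n. c * v n)"

lemma subK_0: "subspaceK S \<Longrightarrow> 0 \<in> S"
  by (simp add: subspaceK_def)
lemma subK_add: "subspaceK S \<Longrightarrow> v \<in> S \<Longrightarrow> w \<in> S \<Longrightarrow> v + w \<in> S"
  by (simp add: subspaceK_def)
lemma subK_sc: "subspaceK S \<Longrightarrow> v \<in> S \<Longrightarrow> sc c v \<in> S"
  by (simp add: subspaceK_def sc_def)
lemma subK_neg: "subspaceK S \<Longrightarrow> v \<in> S \<Longrightarrow> - v \<in> S"
proof -
  assume a: "subspaceK S" "v \<in> S"
  have "sc (-1) v = - v" by (simp add: sc_def fun_eq_iff)
  with subK_sc[OF a, of "-1"] show ?thesis by simp
qed
lemma subK_diff: "subspaceK S \<Longrightarrow> v \<in> S \<Longrightarrow> w \<in> S \<Longrightarrow> v - w \<in> S"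
  using subK_add[of S v "- w"] subK_neg[of S w] by simp
lemma subspaceKI:
  assumes "0 \<in> S" "\<And>v w. v \<in> S \<Longrightarrow> w \<in> S \<Longrightarrow> v + w \<in> S" "\<And>c v. v \<in> S \<Longrightarrow> sc c v \<in> S"
  shows "subspaceK S"
  using assms unfolding subspaceK_def sc_def by blast

lemma subK_inter: "subspaceK A \<Longrightarrow> subspaceK B \<Longrightarrow> subspaceK (A \<inter> B)"
  by (intro subspaceKI) (auto intro: subK_0 subK_add subK_sc)

lemma in_ssum: "a \<in> A \<Longrightarrow> b \<in> B \<Longrightarrow> a + b \<in> ssum A B"
  unfolding ssum_def by blast
lemma ssumE: "x \<in> ssum A B \<Longrightarrow> (\<And>a b. a \<in> A \<Longrightarrow> b \<in> B \<Longrightarrow> x = a + b \<Longrightarrow> P) \<Longrightarrow> P"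
  unfolding ssum_def by blast
lemma ssum_mono: "A \<subseteq> A' \<Longrightarrow> B \<subseteq> B' \<Longrightarrow> ssum A B \<subseteq> ssum A' B'"
  unfolding ssum_def by blast
lemma ssum_commute: "ssum A B = ssum B A"
  unfolding ssum_def by (auto simp: add.commute) (metis add.commute)+
lemma ssum_assoc: "ssum (ssum A B) C = ssum A (ssum B C)"
  unfolding ssum_def by (auto simp: add.assoc) (metis add.assoc)+
lemma ssum_zero: "ssum A {0} = A"
  unfolding ssum_def by auto
lemma ssum_zero2: "ssum {0} A = A"
  unfolding ssum_def by auto
lemma ssum_sup1: "0 \<in> B \<Longrightarrow> A \<subseteq> ssum A B"
  using in_ssum[of _ A 0 B] by auto
lemma ssum_sup2: "0 \<in> A \<Longrightarrow> B \<subseteq> ssum A B"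
  using in_ssum[of 0 A _ B] by auto
lemma ssum_le: "subspaceK S \<Longrightarrow> A \<subseteq> S \<Longrightarrow> B \<subseteq> S \<Longrightarrow> ssum A B \<subseteq> S"
  by (auto elim!: ssumE intro: subK_add)
lemma subK_ssum: "subspaceK A \<Longrightarrow> subspaceK B \<Longrightarrow> subspaceK (ssum A B)"
proof (intro subspaceKI)
  assume a: "subspaceK A" "subspaceK B"
  show "0 \<in> ssum A B" using in_ssum[OF subK_0[OF a(1)] subK_0[OF a(2)]] by simp
  fix v w assume "v \<in> ssum A B" "w \<in> ssum A B"
  then obtain a1 b1 a2 b2 where "a1 \<in> A" "b1 \<in> B" "a2 \<in> A" "b2 \<in> B" "v = a1 + b1" "w = a2 + b2"
    by (auto elim!: ssumE)
  then show "v + w \<in> ssum A B"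
    using in_ssum[of "a1+a2" A "b1+b2" B] subK_add[OF a(1)] subK_add[OF a(2)]
    by (simp add: algebra_simps)
next
  assume a: "subspaceK A" "subspaceK B"
  fix c v assume "v \<in> ssum A B"
  then obtain a1 b1 where "a1 \<in> A" "b1 \<in> B" "v = a1 + b1" by (auto elim!: ssumE)
  moreover have "sc c (a1 + b1) = sc c a1 + sc c b1" by (simp add: sc_def fun_eq_iff algebra_simps)
  ultimately show "sc c v \<in> ssum A B"
    using in_ssum[of "sc c a1" A "sc c b1" B] subK_sc[OF a(1)] subK_sc[OF a(2)] by simp
qed

lemma complement:
  fixes U V :: "(nat \<Rightarrow> 'k::field) set"
  assumes U: "subspaceK U" and V: "subspaceK V" and UV: "U \<subseteq> V"
  shows "\<exists>C. subspaceK C \<and> C \<subseteq> V \<and> U \<inter> C = {0} \<and> ssum U C = V"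
proof -
  define F where "F = {C. subspaceK C \<and> C \<subseteq> V \<and> U \<inter> C \<subseteq> {0}}"
  have z: "subspaceK ({0} :: (nat \<Rightarrow> 'k) set)"
    by (intro subspaceKI) (auto simp: sc_def fun_eq_iff)
  have "{0} \<in> F" unfolding F_def using z subK_0[OF V] by auto
  then have "F \<noteq> {}" by auto
  have "\<exists>M\<in>F. \<forall>X\<in>F. M \<subseteq> X \<longrightarrow> X = M"
  proof (rule subset_Zorn_nonempty[OF \<open>F \<noteq> {}\<close>])
    fix C assume ne: "C \<noteq> {}" and ch: "subset.chain F C"
    have CF: "C \<subseteq> F" and tot: "\<And>a b. a \<in> C \<Longrightarrow> b \<in> C \<Longrightarrow> a \<subseteq> b \<or> b \<subseteq> a"
      using ch unfolding subset.chain_def by blast+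
    have "subspaceK (\<Union>C)"
    proof (intro subspaceKI)
      from ne obtain c where "c \<in> C" by auto
      then show "0 \<in> \<Union>C" using CF unfolding F_def by (auto intro: subK_0)
    next
      fix v w assume "v \<in> \<Union>C" "w \<in> \<Union>C"
      then obtain a b where ab: "a \<in> C" "b \<in> C" "v \<in> a" "w \<in> b" by auto
      from tot[OF ab(1,2)] show "v + w \<in> \<Union>C"
      proof
        assume "a \<subseteq> b" then show ?thesis using ab CF unfolding F_def by (auto intro!: subK_add)
      next
        assume "b \<subseteq> a" then show ?thesis using ab CF unfolding F_def by (auto intro!: subK_add)
      qed
    next
      fix c v assume "v \<in> \<Union>C"
      then show "sc c v \<in> \<Union>C" using CF unfolding F_def by (auto intro: subK_sc)
    qed
    then show "\<Union>C \<in> F" using CF unfolding F_def by auto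
  qed
  then obtain M where MF: "M \<in> F" and Mmax: "\<And>X. X \<in> F \<Longrightarrow> M \<subseteq> X \<Longrightarrow> X = M" by blast
  have M: "subspaceK M" "M \<subseteq> V" "U \<inter> M \<subseteq> {0}" using MF unfolding F_def by auto
  have "V \<subseteq> ssum U M"
  proof
    fix v assume vV: "v \<in> V"
    show "v \<in> ssum U M"
    proof (rule ccontr)
      assume nv: "v \<notin> ssum U M"
      define M' where "M' = {m + sc k v | m k. m \<in> M}"
      have "subspaceK M'"
      proof (intro subspaceKI)
        show "0 \<in> M'" unfolding M'_def using subK_0[OF M(1)]
          by (auto intro!: exI[of _ 0] exI[of _ "0::'k"] simp: sc_def fun_eq_iff)
      next
        fix x y assume "x \<in> M'" "y \<in> M'"
        then obtain m1 k1 m2 k2 where "m1 \<in> M" "m2 \<in> M" "x = m1 + sc k1 v" "y = m2 + sc k2 v"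
          unfolding M'_def by auto
        moreover have "m1 + sc k1 v + (m2 + sc k2 v) = (m1 + m2) + sc (k1 + k2) v"
          by (simp add: sc_def fun_eq_iff algebra_simps)
        ultimately show "x + y \<in> M'" unfolding M'_def using subK_add[OF M(1)] by blast
      next
        fix c x assume "x \<in> M'"
        then obtain m1 k1 where "m1 \<in> M" "x = m1 + sc k1 v" unfolding M'_def by auto
        moreover have "sc c (m1 + sc k1 v) = sc c m1 + sc (c * k1) v"
          by (simp add: sc_def fun_eq_iff algebra_simps)
        ultimately show "sc c x \<in> M'" unfolding M'_def using subK_sc[OF M(1)] by auto
      qed
      moreover have "M' \<subseteq> V" unfolding M'_def using M(2) vV
        by (auto intro!: subK_add[OF V] subK_sc[OF V])
      moreover have "U \<inter> M' \<subseteq> {0}"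
      proof
        fix x assume "x \<in> U \<inter> M'"
        then obtain m k where xU: "x \<in> U" and m: "m \<in> M" and x: "x = m + sc k v" unfolding M'_def by auto
        show "x \<in> {0}"
        proof (cases "k = 0")
          case True
          then have "x = m" using x by (simp add: sc_def fun_eq_iff)
          then show ?thesis using M(3) xU m by auto
        next
          case False
          have "v = sc (inverse k) x + (- sc (inverse k) m)"
            using x False by (simp add: sc_def fun_eq_iff algebra_simps)
          moreover have "sc (inverse k) x \<in> U" using subK_sc[OF U xU] .
          moreover have "- sc (inverse k) m \<in> M" using subK_neg[OF M(1) subK_sc[OF M(1) m]] .
          ultimately have "v \<in> ssum U M" using in_ssum by metis
          then show ?thesis using nv by simp
        qed
      qed
      ultimately have "M' \<in> F" unfolding F_def by auto
      moreover have "M \<subseteq> M'" unfolding M'_def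
        by (auto intro!: exI[of _ "0::'k"] simp: sc_def fun_eq_iff)
      ultimately have "M' = M" using Mmax by auto
      moreover have "v \<in> M'" unfolding M'_def using subK_0[OF M(1)]
        by (auto intro!: exI[of _ 0] exI[of _ "1::'k"] simp: sc_def fun_eq_iff)
      ultimately have "v \<in> M" by simp
      then have "v \<in> ssum U M" using ssum_sup2[OF subK_0[OF U]] by auto
      then show False using nv by simp
    qed
  qed
  moreover have "ssum U M \<subseteq> V" using ssum_le[OF V UV M(2)] .
  moreover have "U \<inter> M = {0}" using M(3) subK_0[OF U] subK_0[OF M(1)] by auto
  ultimately show ?thesis using M(1,2) by blast
qed

lemma complement2:
  fixes U V X :: "(nat \<Rightarrow> 'k::field) set"
  assumes U: "subspaceK U" and V: "subspaceK V" and X: "subspaceK X" and UV: "U \<subseteq> V" and XV: "X \<subseteq> V"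
  shows "\<exists>C. subspaceK C \<and> C \<subseteq> V \<and> U \<inter> C = {0} \<and> ssum U C = V \<and> ssum (X \<inter> U) (X \<inter> C) = X"
proof -
  obtain F where F: "subspaceK F" "F \<subseteq> X" "(X \<inter> U) \<inter> F = {0}" "ssum (X \<inter> U) F = X"
    using complement[OF subK_inter[OF X U], of X] X by auto
  have UF: "ssum U F \<subseteq> V" using ssum_le[OF V UV] F(2) XV by auto
  obtain G where G: "subspaceK G" "G \<subseteq> V" "ssum U F \<inter> G = {0}" "ssum (ssum U F) G = V"
    using complement[OF subK_ssum[OF U F(1)] V UF] by auto
  define C where "C = ssum F G"
  have C: "subspaceK C" using subK_ssum[OF F(1) G(1)] by (simp add: C_def)
  have CV: "C \<subseteq> V" unfolding C_def using ssum_le[OF V] F(2) XV G(2) by auto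
  have "U \<inter> C \<subseteq> {0}"
  proof
    fix x assume "x \<in> U \<inter> C"
    then obtain f g where xU: "x \<in> U" and fg: "f \<in> F" "g \<in> G" "x = f + g" unfolding C_def
      by (auto elim!: ssumE)
    have "g = x + (- f)" using fg by simp
    moreover have "x + (- f) \<in> ssum U F" using in_ssum[OF xU subK_neg[OF F(1) fg(1)]] .
    ultimately have "g \<in> ssum U F \<inter> G" using fg(2) by simp
    then have "g = 0" using G(3) by auto
    then have "x = f" using fg by simp
    then show "x \<in> {0}" using F(2,3) xU fg(1) by auto
  qed
  then have UC: "U \<inter> C = {0}" using subK_0[OF U] subK_0[OF C] by auto
  have "ssum U C = V" using G(4) by (simp add: C_def ssum_assoc)
  moreover have "ssum (X \<inter> U) (X \<inter> C) = X"
  proof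
    show "ssum (X \<inter> U) (X \<inter> C) \<subseteq> X" using ssum_le[OF X] by blast
    have "F \<subseteq> C" unfolding C_def using ssum_sup1[OF subK_0[OF G(1)]] .
    then have "ssum (X \<inter> U) F \<subseteq> ssum (X \<inter> U) (X \<inter> C)" using F(2) by (intro ssum_mono) auto
    then show "X \<subseteq> ssum (X \<inter> U) (X \<inter> C)" using F(4) by simp
  qed
  ultimately show ?thesis using C CV UC by blast
qed


definition splitsK :: "(nat \<Rightarrow> 'k::field) set \<Rightarrow> (nat \<Rightarrow> 'k) set \<Rightarrow> (nat \<Rightarrow> 'k) set \<Rightarrow> bool" where
  "splitsK A B S \<longleftrightarrow> S \<subseteq> ssum (S \<inter> A) (S \<inter> B)"

lemma splits_eq: "subspaceK S \<Longrightarrow> splitsK A B S \<Longrightarrow> ssum (S \<inter> A) (S \<inter> B) = S"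
  unfolding splitsK_def using ssum_le[of S "S \<inter> A" "S \<inter> B"] by blast

lemma splits_inter:
  assumes A: "subspaceK A" and B: "subspaceK B" and AB: "A \<inter> B = {0}"
    and sS: "splitsK A B S" and sT: "splitsK A B T"
  shows "splitsK A B (S \<inter> T)"
  unfolding splitsK_def
proof
  fix x assume x: "x \<in> S \<inter> T"
  obtain a b where ab: "a \<in> S \<inter> A" "b \<in> S \<inter> B" "x = a + b"
    using x sS unfolding splitsK_def by (auto elim!: ssumE)
  obtain a' b' where ab': "a' \<in> T \<inter> A" "b' \<in> T \<inter> B" "x = a' + b'"
    using x sT unfolding splitsK_def by (auto elim!: ssumE)
  have "a - a' = b' - b" using ab ab' by (simp add: algebra_simps)
  moreover have "a - a' \<in> A" using subK_diff[OF A] ab ab' by auto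
  moreover have "b' - b \<in> B" using subK_diff[OF B] ab ab' by auto
  ultimately have "b' - b \<in> A \<inter> B" by simp
  then have "b' - b = 0" using AB by blast
  then have "a - a' = 0" "b' - b = 0" using \<open>a - a' = b' - b\<close> by auto
  then have "a = a'" "b = b'" by auto
  then show "x \<in> ssum (S \<inter> T \<inter> A) (S \<inter> T \<inter> B)"
    using ab ab' in_ssum[of a "S \<inter> T \<inter> A" b "S \<inter> T \<inter> B"] by auto
qed

lemma splits_sum:
  assumes A: "subspaceK A" and B: "subspaceK B"
    and sS: "splitsK A B S" and sT: "splitsK A B T"
  shows "splitsK A B (ssum S T)"
  unfolding splitsK_def
proof
  fix x assume "x \<in> ssum S T"
  then obtain s t where st: "s \<in> S" "t \<in> T" "x = s + t" by (auto elim!: ssumE)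
  obtain a b where ab: "a \<in> S \<inter> A" "b \<in> S \<inter> B" "s = a + b"
    using st sS unfolding splitsK_def by (auto elim!: ssumE)
  obtain a' b' where ab': "a' \<in> T \<inter> A" "b' \<in> T \<inter> B" "t = a' + b'"
    using st sT unfolding splitsK_def by (auto elim!: ssumE)
  have "x = (a + a') + (b + b')" using st ab ab' by (simp add: algebra_simps)
  moreover have "a + a' \<in> ssum S T \<inter> A" using ab ab' in_ssum[of a S a' T] subK_add[OF A] by auto
  moreover have "b + b' \<in> ssum S T \<inter> B" using ab ab' in_ssum[of b S b' T] subK_add[OF B] by auto
  ultimately show "x \<in> ssum (ssum S T \<inter> A) (ssum S T \<inter> B)" using in_ssum by metis
qed

lemma evalL_sub:
  assumes "is_rep X0 Xs Ys"
  shows "subspaceK (evalL X0 Xs Ys a) \<and> evalL X0 Xs Ys a \<subseteq> X0"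
  using assms
proof (induction a)
  case (Meet a b) then show ?case by (auto intro: subK_inter)
next
  case (Join a b) then show ?case
    using subK_ssum ssum_le[of X0] by (auto simp: is_rep_def)
qed (auto simp: is_rep_def)

lemma evalL_splits:
  assumes rep: "is_rep X0 Xs Ys" and A: "subspaceK A" and B: "subspaceK B" and AB: "A \<inter> B = {0}"
    and X0: "ssum A B = X0"
    and sX: "\<And>k. splitsK A B (Xs k)" and sY: "\<And>k. splitsK A B (Ys k)"
  shows "splitsK A B (evalL X0 Xs Ys a)"
proof (induction a)
  case TopI
  have "A \<subseteq> X0" using X0 ssum_sup1[OF subK_0[OF B], of A] by simp
  moreover have "B \<subseteq> X0" using X0 ssum_sup2[OF subK_0[OF A], of B] by simp
  ultimately show ?case using X0 unfolding splitsK_def by (auto elim!: ssumE intro!: in_ssum)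
next
  case (Meet a b) then show ?case using splits_inter[OF A B AB] by simp
next
  case (Join a b) then show ?case using splits_sum[OF A B] by simp
qed (use sX sY in auto)

lemma indec_split:
  assumes ind: "indecomposable X0 Xs Ys" and A: "subspaceK A" and B: "subspaceK B" and AB: "A \<inter> B = {0}"
    and X0: "ssum A B = X0"
    and sX: "\<And>k. splitsK A B (Xs k)" and sY: "\<And>k. splitsK A B (Ys k)"
  shows "A = {0} \<or> B = {0}"
proof -
  have rep: "is_rep X0 Xs Ys" using ind by (simp add: indecomposable_def)
  have "\<forall>a. evalL X0 Xs Ys a = ssum (evalL X0 Xs Ys a \<inter> A) (evalL X0 Xs Ys a \<inter> B)"
    using splits_eq[OF conjunct1[OF evalL_sub[OF rep]] evalL_splits[OF rep A B AB X0 sX sY]] by auto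
  then show ?thesis using ind A B AB X0 unfolding indecomposable_def by blast
qed


definition PP :: "(idx \<Rightarrow> (nat \<Rightarrow> 'k::field) set) \<Rightarrow> idx \<Rightarrow> (nat \<Rightarrow> 'k) set" where
  "PP Ys k = phiMap k (PhiX0 Ys)"

definition WW :: "(idx \<Rightarrow> (nat \<Rightarrow> 'k::field) set) \<Rightarrow> (nat \<Rightarrow> 'k) set" where
  "WW Ys = ssum (PP Ys I1) (ssum (PP Ys I2) (PP Ys I3))"

lemma PhiX0_iff: "\<eta> \<in> PhiX0 Ys \<longleftrightarrow> (\<forall>i. \<eta> i \<in> Ys i) \<and> \<eta> I1 + \<eta> I2 + \<eta> I3 = 0"
  by (simp add: PhiX0_def Rsp_def)

lemma idx_all: "(\<forall>i. P i) \<longleftrightarrow> P I1 \<and> P I2 \<and> P I3"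
  by (metis idx.exhaust)

lemma mem3: "0 \<in> F I1 \<Longrightarrow> 0 \<in> F I2 \<Longrightarrow> 0 \<in> F I3 \<Longrightarrow> F k \<subseteq> ssum (F I1) (ssum (F I2) (F I3))"
proof (cases k)
  case I1 assume a: "0 \<in> F I1" "0 \<in> F I2" "0 \<in> F I3"
  have "0 \<in> ssum (F I2) (F I3)" using in_ssum[OF a(2,3)] by simp
  then show ?thesis using I1 ssum_sup1 by blast
next
  case I2 assume a: "0 \<in> F I1" "0 \<in> F I2" "0 \<in> F I3"
  then have "F I2 \<subseteq> ssum (F I2) (F I3)" using ssum_sup1 by blast
  also have "... \<subseteq> ssum (F I1) (ssum (F I2) (F I3))" using ssum_sup2 a by blast
  finally show ?thesis using I2 by simp
next
  case I3 assume a: "0 \<in> F I1" "0 \<in> F I2" "0 \<in> F I3"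
  then have "F I3 \<subseteq> ssum (F I2) (F I3)" using ssum_sup2 by blast
  also have "... \<subseteq> ssum (F I1) (ssum (F I2) (F I3))" using ssum_sup2 a by blast
  finally show ?thesis using I3 by simp
qed

lemma obtain3:
  assumes "x \<in> ssum (F I1) (ssum (F I2) (F I3))"
  obtains c where "\<And>k. c k \<in> F k" "x = c I1 + c I2 + c I3"
proof -
  obtain c1 c2 c3 where "c1 \<in> F I1" "c2 \<in> F I2" "c3 \<in> F I3" "x = c1 + (c2 + c3)"
    using assms by (auto elim!: ssumE)
  then show ?thesis
    by (intro that[of "\<lambda>k. case k of I1 \<Rightarrow> c1 | I2 \<Rightarrow> c2 | I3 \<Rightarrow> c3"])
       (auto split: idx.split simp: add.assoc)
qed

lemma subK_3: "subspaceK (F I1) \<Longrightarrow> subspaceK (F I2) \<Longrightarrow> subspaceK (F I3) \<Longrightarrow>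
   subspaceK (ssum (F I1) (ssum (F I2) (F I3)))"
  by (intro subK_ssum)

context
  fixes X0 :: "(nat \<Rightarrow> 'k::field) set" and Xs Ys :: "idx \<Rightarrow> (nat \<Rightarrow> 'k) set"
  assumes rep: "is_rep X0 Xs Ys"
begin

lemma Ys_sub: "subspaceK (Ys k)" "Ys k \<subseteq> X0" "subspaceK (Xs k)" "Xs k \<subseteq> Ys k" "subspaceK X0"
  using rep by (auto simp: is_rep_def)

lemma PP_sub: "PP Ys k \<subseteq> Ys k"
  unfolding PP_def phiMap_def PhiX0_def Rsp_def by auto

lemma PP_mem: "\<eta> \<in> PhiX0 Ys \<Longrightarrow> \<eta> k \<in> PP Ys k"
  unfolding PP_def phiMap_def by auto

lemma PhiX0_0: "0 \<in> PhiX0 Ys"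
  using subK_0[OF Ys_sub(1)] by (simp add: PhiX0_iff)

lemma PhiX0_add: "\<eta> \<in> PhiX0 Ys \<Longrightarrow> \<mu> \<in> PhiX0 Ys \<Longrightarrow> \<eta> + \<mu> \<in> PhiX0 Ys"
proof -
  assume a: "\<eta> \<in> PhiX0 Ys" "\<mu> \<in> PhiX0 Ys"
  have "(\<eta> + \<mu>) I1 + (\<eta> + \<mu>) I2 + (\<eta> + \<mu>) I3 = (\<eta> I1 + \<eta> I2 + \<eta> I3) + (\<mu> I1 + \<mu> I2 + \<mu> I3)"
    by (simp add: algebra_simps)
  also have "... = 0" using a by (simp add: PhiX0_iff)
  finally show ?thesis using a subK_add[OF Ys_sub(1)] unfolding PhiX0_iff by simp
qed

lemma PhiX0_sc: "\<eta> \<in> PhiX0 Ys \<Longrightarrow> (\<lambda>i. sc c (\<eta> i)) \<in> PhiX0 Ys"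
proof -
  assume a: "\<eta> \<in> PhiX0 Ys"
  have "sc c (\<eta> I1) + sc c (\<eta> I2) + sc c (\<eta> I3) = sc c (\<eta> I1 + \<eta> I2 + \<eta> I3)"
    by (simp add: sc_def fun_eq_iff algebra_simps)
  then show ?thesis using a subK_sc[OF Ys_sub(1)] unfolding PhiX0_iff by (simp add: sc_def fun_eq_iff)
qed

lemma PhiX0_neg: "\<eta> \<in> PhiX0 Ys \<Longrightarrow> - \<eta> \<in> PhiX0 Ys"
proof -
  assume a: "\<eta> \<in> PhiX0 Ys"
  have "- \<eta> = (\<lambda>i. sc (-1) (\<eta> i))" by (simp add: sc_def fun_eq_iff)
  then show ?thesis using PhiX0_sc[OF a] by simp
qed

lemma PP_subK: "subspaceK (PP Ys k)"
proof (intro subspaceKI)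
  show "0 \<in> PP Ys k" using PP_mem[OF PhiX0_0] by simp
  fix v w assume "v \<in> PP Ys k" "w \<in> PP Ys k"
  then obtain \<eta> \<mu> where "\<eta> \<in> PhiX0 Ys" "\<mu> \<in> PhiX0 Ys" "v = \<eta> k" "w = \<mu> k"
    unfolding PP_def phiMap_def by auto
  then show "v + w \<in> PP Ys k" using PP_mem[OF PhiX0_add] by fastforce
next
  fix c v assume "v \<in> PP Ys k"
  then obtain \<eta> where "\<eta> \<in> PhiX0 Ys" "v = \<eta> k"
    unfolding PP_def phiMap_def by auto
  then show "sc c v \<in> PP Ys k" using PP_mem[OF PhiX0_sc] by fastforce
qed

lemma WW_subK: "subspaceK (WW Ys)"
  unfolding WW_def by (intro subK_ssum PP_subK)

lemma PP_W: "PP Ys k \<subseteq> WW Ys"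
  unfolding WW_def by (rule mem3) (auto intro: subK_0 PP_subK)

lemma WW_X0: "WW Ys \<subseteq> X0"
proof -
  have "PP Ys k \<subseteq> X0" for k using PP_sub Ys_sub(2) by blast
  then show ?thesis unfolding WW_def using ssum_le[OF Ys_sub(5)] by metis
qed

lemma dichotomy:
  assumes ind: "indecomposable X0 Xs Ys" and ne: "PhiX0 Ys \<noteq> {0}"
  shows "WW Ys = X0" "\<And>k. Ys k = PP Ys k"
proof -
  have "\<forall>k. \<exists>C. subspaceK C \<and> C \<subseteq> Ys k \<and> PP Ys k \<inter> C = {0} \<and> ssum (PP Ys k) C = Ys k
        \<and> ssum (Xs k \<inter> PP Ys k) (Xs k \<inter> C) = Xs k"
    using complement2[OF PP_subK Ys_sub(1) Ys_sub(3) PP_sub Ys_sub(4)] by blast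
  from choice[OF this] obtain C where C0: "\<forall>k. subspaceK (C k) \<and> C k \<subseteq> Ys k \<and> PP Ys k \<inter> C k = {0} \<and> ssum (PP Ys k) (C k) = Ys k
        \<and> ssum (Xs k \<inter> PP Ys k) (Xs k \<inter> C k) = Xs k" by blast
  have C: "\<And>k. subspaceK (C k)" "\<And>k. C k \<subseteq> Ys k" "\<And>k. PP Ys k \<inter> C k = {0}"
     "\<And>k. ssum (PP Ys k) (C k) = Ys k" "\<And>k. ssum (Xs k \<inter> PP Ys k) (Xs k \<inter> C k) = Xs k"
    using C0 by auto
  define Cs where "Cs = ssum (C I1) (ssum (C I2) (C I3))"
  have Cs: "subspaceK Cs" unfolding Cs_def by (intro subK_ssum C(1))
  have CCs: "C k \<subseteq> Cs" for k unfolding Cs_def by (rule mem3) (auto intro: subK_0 C(1))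
  have "C k \<subseteq> X0" for k using C(2) Ys_sub(2) by blast
  then have CsX0: "Cs \<subseteq> X0" unfolding Cs_def using ssum_le[OF Ys_sub(5)] by metis
  define Ysum where "Ysum = ssum (WW Ys) Cs"
  have Ysum: "subspaceK Ysum" "Ysum \<subseteq> X0" unfolding Ysum_def
    using subK_ssum[OF WW_subK Cs] ssum_le[OF Ys_sub(5) WW_X0 CsX0] by auto
  obtain D where D: "subspaceK D" "D \<subseteq> X0" "Ysum \<inter> D = {0}" "ssum Ysum D = X0"
    using complement[OF Ysum(1) Ys_sub(5) Ysum(2)] by auto
  define E where "E = ssum Cs D"
  have E: "subspaceK E" unfolding E_def using subK_ssum[OF Cs D(1)] .
  have CsE: "Cs \<subseteq> E" unfolding E_def using ssum_sup1[OF subK_0[OF D(1)]] .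
  have DE: "D \<subseteq> E" unfolding E_def using ssum_sup2[OF subK_0[OF Cs]] .
  have WE: "WW Ys \<inter> E = {0}"
  proof -
    have "WW Ys \<inter> E \<subseteq> {0}"
    proof
      fix x assume x: "x \<in> WW Ys \<inter> E"
      then obtain cs d where cd: "cs \<in> Cs" "d \<in> D" "x = cs + d" unfolding E_def by (auto elim!: ssumE)
      have "d = x + (- cs)" using cd by simp
      moreover have "x + (- cs) \<in> Ysum" unfolding Ysum_def using in_ssum[of x "WW Ys" "- cs" Cs] x subK_neg[OF Cs cd(1)] by simp
      ultimately have "d \<in> Ysum \<inter> D" using cd by simp
      then have "d = 0" using D(3) by blast
      then have xc: "x = cs" using cd by simp
      obtain c where c: "\<And>k. c k \<in> C k" "cs = c I1 + c I2 + c I3"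
        using obtain3[of cs C] cd(1) unfolding Cs_def by blast
      obtain p where p: "\<And>k. p k \<in> PP Ys k" "x = p I1 + p I2 + p I3"
        using obtain3[of x "PP Ys"] x unfolding WW_def by blast
      define \<tau> where "\<tau> = (\<lambda>k. c k - p k)"
      have "\<tau> \<in> PhiX0 Ys" unfolding PhiX0_iff \<tau>_def
      proof
        show "\<forall>i. c i - p i \<in> Ys i" using c(1) p(1) C(2) PP_sub subK_diff[OF Ys_sub(1)] by blast
        show "c I1 - p I1 + (c I2 - p I2) + (c I3 - p I3) = 0" using c(2) p(2) xc by (simp add: algebra_simps)
      qed
      then have "\<tau> k \<in> PP Ys k" for k by (rule PP_mem)
      then have "\<tau> k + p k \<in> PP Ys k" for k using subK_add[OF PP_subK] p(1) by blast
      then have "c k \<in> PP Ys k \<inter> C k" for k using c(1) by (simp add: \<tau>_def)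
      then have "c k = 0" for k using C(3) by blast
      then show "x \<in> {0}" using xc c(2) by simp
    qed
    then show ?thesis using subK_0[OF WW_subK] subK_0[OF E] by auto
  qed
  have WEX: "ssum (WW Ys) E = X0" unfolding E_def using D(4) by (simp add: Ysum_def ssum_assoc)
  have sY: "splitsK (WW Ys) E (Ys k)" for k
  proof -
    have "Ys k = ssum (PP Ys k) (C k)" using C(4) by simp
    also have "... \<subseteq> ssum (Ys k \<inter> WW Ys) (Ys k \<inter> E)"
      using PP_sub PP_W C(2) CCs CsE by (intro ssum_mono) blast+
    finally show ?thesis unfolding splitsK_def .
  qed
  have sX: "splitsK (WW Ys) E (Xs k)" for k
  proof -
    have "Xs k = ssum (Xs k \<inter> PP Ys k) (Xs k \<inter> C k)" using C(5) by simp
    also have "... \<subseteq> ssum (Xs k \<inter> WW Ys) (Xs k \<inter> E)"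
      using PP_W CCs CsE by (intro ssum_mono) blast+
    finally show ?thesis unfolding splitsK_def .
  qed
  from indec_split[OF ind WW_subK E WE WEX sX sY]
  have "WW Ys = {0} \<or> E = {0}" .
  moreover have "WW Ys \<noteq> {0}"
  proof
    assume W0: "WW Ys = {0}"
    have "PhiX0 Ys \<subseteq> {0}"
    proof
      fix \<eta> assume "\<eta> \<in> PhiX0 Ys"
      then have "\<eta> k = 0" for k using PP_mem PP_W W0 by blast
      then show "\<eta> \<in> {0}" by (simp add: fun_eq_iff)
    qed
    then show False using ne PhiX0_0 by blast
  qed
  ultimately have E0: "E = {0}" by simp
  then have "C k = {0}" for k using CCs CsE subK_0[OF C(1)] by blast
  then show "Ys k = PP Ys k" for k using C(4) by (simp add: ssum_zero)
  have "D = {0}" using DE E0 subK_0[OF D(1)] by blast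
  moreover have "Cs = {0}" using CsE E0 subK_0[OF Cs] by blast
  ultimately show "WW Ys = X0" using D(4) by (simp add: Ysum_def ssum_zero)
qed

lemma PP_third:
  assumes "i \<noteq> j"
  shows "PP Ys k \<subseteq> ssum (PP Ys i) (PP Ys j)"
proof
  fix x assume "x \<in> PP Ys k"
  then obtain \<eta> where eta: "\<eta> \<in> PhiX0 Ys" "x = \<eta> k" unfolding PP_def phiMap_def by auto
  have m: "(- \<eta>) i \<in> PP Ys i" "(- \<eta>) j \<in> PP Ys j" "\<eta> i \<in> PP Ys i" "\<eta> j \<in> PP Ys j"
    "0 \<in> PP Ys i" "0 \<in> PP Ys j"
    using PP_mem[OF PhiX0_neg[OF eta(1)]] PP_mem[OF eta(1)] subK_0[OF PP_subK] by auto
  have s: "\<eta> I1 + \<eta> I2 + \<eta> I3 = 0" using eta(1) by (simp add: PhiX0_iff)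
  have e3: "\<eta> I3 = (- \<eta>) I1 + (- \<eta>) I2"
  proof -
    have "\<eta> I3 = (\<eta> I1 + \<eta> I2 + \<eta> I3) - \<eta> I1 - \<eta> I2" by (simp add: algebra_simps)
    then show ?thesis using s by simp
  qed
  have e2: "\<eta> I2 = (- \<eta>) I1 + (- \<eta>) I3"
  proof -
    have "\<eta> I2 = (\<eta> I1 + \<eta> I2 + \<eta> I3) - \<eta> I1 - \<eta> I3" by (simp add: algebra_simps)
    then show ?thesis using s by simp
  qed
  have e1: "\<eta> I1 = (- \<eta>) I2 + (- \<eta>) I3"
  proof -
    have "\<eta> I1 = (\<eta> I1 + \<eta> I2 + \<eta> I3) - \<eta> I2 - \<eta> I3" by (simp add: algebra_simps)
    then show ?thesis using s by simp
  qed
  have e1': "\<eta> I1 = (- \<eta>) I3 + (- \<eta>) I2" using e1 by (simp add: add.commute)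
  have e2': "\<eta> I2 = (- \<eta>) I3 + (- \<eta>) I1" using e2 by (simp add: add.commute)
  have e3': "\<eta> I3 = (- \<eta>) I2 + (- \<eta>) I1" using e3 by (simp add: add.commute)
  have "x = (- \<eta>) i + (- \<eta>) j \<or> x = \<eta> i + 0 \<or> x = 0 + \<eta> j"
    using assms eta(2) e1 e2 e3 e1' e2' e3'
    by (cases i; cases j; cases k; simp only: idx.distinct idx.simps add_0_right add_0_left; blast)
  then show "x \<in> ssum (PP Ys i) (PP Ys j)" using m in_ssum by metis
qed

lemma X0_pair:
  assumes ind: "indecomposable X0 Xs Ys" and ne: "PhiX0 Ys \<noteq> {0}" and ij: "i \<noteq> j"
  shows "ssum (PP Ys i) (PP Ys j) = X0"
proof
  have "PP Ys k \<subseteq> X0" for k using PP_sub Ys_sub(2) by blast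
  then show "ssum (PP Ys i) (PP Ys j) \<subseteq> X0"
    using ssum_le[OF Ys_sub(5)] by metis
  have S: "subspaceK (ssum (PP Ys i) (PP Ys j))" using subK_ssum[OF PP_subK PP_subK] .
  have "ssum (PP Ys I2) (PP Ys I3) \<subseteq> ssum (PP Ys i) (PP Ys j)"
    using ssum_le[OF S PP_third[OF ij] PP_third[OF ij]] .
  then have "WW Ys \<subseteq> ssum (PP Ys i) (PP Ys j)"
    unfolding WW_def using ssum_le[OF S PP_third[OF ij]] by blast
  then show "X0 \<subseteq> ssum (PP Ys i) (PP Ys j)" using dichotomy(1)[OF ind ne] by simp
qed

end


fun code :: "idx \<Rightarrow> nat" where
  "code I1 = 0" | "code I2 = 1" | "code I3 = 2"

definition ixo :: "nat \<Rightarrow> idx" where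
  "ixo m = (if m = 0 then I1 else if m = 1 then I2 else I3)"

definition TT :: "(idx \<Rightarrow> nat \<Rightarrow> 'a) \<Rightarrow> nat \<Rightarrow> 'a" where
  "TT \<eta> = (\<lambda>n. \<eta> (ixo (n mod 3)) (n div 3))"

definition MM :: "(nat \<Rightarrow> 'a) \<Rightarrow> idx \<Rightarrow> nat \<Rightarrow> 'a" where
  "MM v = (\<lambda>i n. v (3 * n + code i))"

lemma code_lt: "code i < 3"
  by (cases i) auto
lemma code_aux1: "(3 * n + code i) mod 3 = code i"
  using code_lt[of i] by presburger
lemma code_aux2: "(3 * n + code i) div 3 = n"
  using code_lt[of i] by presburger
lemma code_mod: "code i mod 3 = code i"
  using code_lt[of i] by simp
lemma code_aux3: "ixo (code i) = i"
  by (cases i) (auto simp: ixo_def)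

lemma MM_TT[simp]: "MM (TT \<eta>) = \<eta>"
  by (simp add: MM_def TT_def fun_eq_iff code_aux1 code_aux2 code_aux3 code_mod del: add_mult_distrib2 mod_mult_self3 div_mult_self3)

lemma TT_inj: "inj TT"
proof (rule injI)
  fix x y :: "idx \<Rightarrow> nat \<Rightarrow> 'a" assume "TT x = TT y"
  then have "MM (TT x) = MM (TT y)" by simp
  then show "x = y" by simp
qed

lemma TT_add: "TT (\<eta> + \<mu>) = TT \<eta> + (TT \<mu> :: nat \<Rightarrow> 'a::plus)"
  by (simp add: TT_def fun_eq_iff)
lemma TT_0: "TT 0 = (0 :: nat \<Rightarrow> 'a::zero)"
  by (simp add: TT_def fun_eq_iff)
lemma TT_sc: "TT (\<lambda>i. sc c (\<eta> i)) = sc c (TT \<eta>)"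
  by (simp add: TT_def sc_def fun_eq_iff)
lemma MM_add: "MM (v + w) = MM v + (MM w :: idx \<Rightarrow> nat \<Rightarrow> 'a::plus)"
  by (simp add: MM_def fun_eq_iff)
lemma MM_diff: "MM (v - w) = MM v - (MM w :: idx \<Rightarrow> nat \<Rightarrow> 'a::minus)"
  by (simp add: MM_def fun_eq_iff)
lemma MM_neg: "MM (- v) = - (MM v :: idx \<Rightarrow> nat \<Rightarrow> 'a::uminus)"
  by (simp add: MM_def fun_eq_iff)
lemma MM_0: "MM 0 = (0 :: idx \<Rightarrow> nat \<Rightarrow> 'a::zero)"
  by (simp add: MM_def fun_eq_iff)
lemma MM_sc: "MM (sc c v) k = sc c (MM v k)"
  by (simp add: MM_def sc_def fun_eq_iff)

lemma TT_img: "v \<in> TT ` S \<Longrightarrow> MM v \<in> S \<and> v = TT (MM v)"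
  by auto

lemma ssum_image:
  assumes "\<And>a b. g (a + b) = g a + g b"
  shows "g ` ssum A B = ssum (g ` A) (g ` B)"
proof
  show "g ` ssum A B \<subseteq> ssum (g ` A) (g ` B)"
    using assms by (auto elim!: ssumE intro!: in_ssum)
  show "ssum (g ` A) (g ` B) \<subseteq> g ` ssum A B"
  proof
    fix x assume "x \<in> ssum (g ` A) (g ` B)"
    then obtain a b where "a \<in> A" "b \<in> B" "x = g a + g b" by (auto elim!: ssumE)
    then have "x = g (a + b)" "a + b \<in> ssum A B" using assms in_ssum by auto
    then show "x \<in> g ` ssum A B" by blast
  qed
qed

lemma evalL_image:
  fixes T :: "'a::ab_group_add \<Rightarrow> 'b::ab_group_add"
  assumes inj: "inj T" and add: "\<And>a b. T (a + b) = T a + T b"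
  shows "evalL (T ` X0) (\<lambda>i. T ` Xs i) (\<lambda>i. T ` Ys i) a = T ` evalL X0 Xs Ys a"
proof (induction a)
  case (Meet a b) then show ?case using inj by (simp add: image_Int)
next
  case (Join a b) then show ?case using ssum_image[of T, OF add] by simp
qed auto

lemma subK_image:
  assumes S: "subspaceK S" and add: "\<And>a b. g (a + b) = g a + g b" and sc: "\<And>c a. g (sc c a) = sc c (g a)"
  shows "subspaceK (g ` S)"
proof (intro subspaceKI)
  have "g 0 = g 0 + g 0" using add[of 0 0] by simp
  then have "g 0 = 0" by simp
  then show "0 \<in> g ` S" using subK_0[OF S] by force
  fix v w assume "v \<in> g ` S" "w \<in> g ` S"
  then obtain a b where "a \<in> S" "b \<in> S" "v = g a" "w = g b" by auto
  then show "v + w \<in> g ` S" using subK_add[OF S] add[of a b] by (metis image_eqI)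
next
  fix c v assume "v \<in> g ` S"
  then obtain a where "a \<in> S" "v = g a" by auto
  then show "sc c v \<in> g ` S" using subK_sc[OF S] sc[of c a] by (metis image_eqI)
qed

lemma subK_TT:
  assumes "0 \<in> S" "\<And>\<eta> \<mu>. \<eta> \<in> S \<Longrightarrow> \<mu> \<in> S \<Longrightarrow> \<eta> + \<mu> \<in> S"
    "\<And>c \<eta>. \<eta> \<in> S \<Longrightarrow> (\<lambda>i. sc c (\<eta> i)) \<in> S"
  shows "subspaceK (TT ` (S :: (idx \<Rightarrow> nat \<Rightarrow> 'k::field) set))"
proof (intro subspaceKI)
  show "0 \<in> TT ` S" using assms(1) TT_0 by (metis image_eqI)
  fix v w assume "v \<in> TT ` S" "w \<in> TT ` S"
  then obtain a b where "a \<in> S" "b \<in> S" "v = TT a" "w = TT b" by auto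
  then show "v + w \<in> TT ` S" using assms(2)[of a b] TT_add[of a b] by (metis image_eqI)
next
  fix c v assume "v \<in> TT ` S"
  then obtain a where "a \<in> S" "v = TT a" by auto
  then show "sc c v \<in> TT ` S" using assms(3)[of a c] TT_sc[of c a] by (metis image_eqI)
qed

lemma uniq_dec:
  assumes A: "subspaceK A" and B: "subspaceK B" and AB: "A \<inter> B = {0}"
    and "a \<in> A" "a' \<in> A" "b \<in> B" "b' \<in> B" "a + b = a' + b'"
  shows "a = a'"
proof -
  have "a - a' = b' - b" using assms(8) by (simp add: algebra_simps)
  moreover have "a - a' \<in> A" using subK_diff[OF A] assms by auto
  moreover have "b' - b \<in> B" using subK_diff[OF B] assms by auto
  ultimately have "a - a' \<in> A \<inter> B" by simp
  then show ?thesis using AB by auto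
qed

lemma ssum_left_commute: "ssum A (ssum B C) = ssum B (ssum A C)"
proof -
  have "ssum A (ssum B C) = ssum (ssum A B) C" by (simp add: ssum_assoc)
  also have "... = ssum (ssum B A) C" by (simp add: ssum_commute)
  also have "... = ssum B (ssum A C)" by (simp add: ssum_assoc)
  finally show ?thesis .
qed

lemma ssum_swap: "ssum (ssum a b) (ssum c d) = ssum (ssum a c) (ssum b d)"
proof -
  have "ssum (ssum a b) (ssum c d) = ssum a (ssum b (ssum c d))" by (simp add: ssum_assoc)
  also have "... = ssum a (ssum c (ssum b d))" by (simp add: ssum_left_commute)
  also have "... = ssum (ssum a c) (ssum b d)" by (simp add: ssum_assoc)
  finally show ?thesis .
qed


lemma Hp_Phi: "Hp Ys k \<inter> PhiX0 Ys = {\<eta>. \<eta> \<in> PhiX0 Ys \<and> \<eta> k = 0}"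
  by (auto simp: Hp_def PhiX0_def)
lemma Gp_Phi: "Gp Xs Ys k \<inter> PhiX0 Ys = {\<eta>. \<eta> \<in> PhiX0 Ys \<and> \<eta> k \<in> Xs k}"
  by (auto simp: Gp_def PhiX0_def)

lemma evalR:
  fixes Xs Ys :: "idx \<Rightarrow> (nat \<Rightarrow> 'k::field) set"
  shows "evalL (TT ` PhiX0 Ys) (\<lambda>k. TT ` (Hp Ys k \<inter> PhiX0 Ys)) (\<lambda>k. TT ` (Gp Xs Ys k \<inter> PhiX0 Ys)) a
     = TT ` evalPhiPlus Xs Ys (a :: lterm)"
proof -
  note x = evalL_image[OF TT_inj]
  note y = x[OF TT_add]
  show ?thesis unfolding evalPhiPlus_def using y by simp
qed

context
  fixes X0 :: "(nat \<Rightarrow> 'k::field) set" and Xs Ys :: "idx \<Rightarrow> (nat \<Rightarrow> 'k) set"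
  assumes rep: "is_rep X0 Xs Ys"
begin

lemma rep_R: "is_rep (TT ` PhiX0 Ys) (\<lambda>k. TT ` (Hp Ys k \<inter> PhiX0 Ys)) (\<lambda>k. TT ` (Gp Xs Ys k \<inter> PhiX0 Ys))"
  unfolding is_rep_def
proof (intro conjI allI)
  show "subspaceK (TT ` PhiX0 Ys)"
    using subK_TT[OF PhiX0_0[OF rep] PhiX0_add[OF rep] PhiX0_sc[OF rep]] .
  fix k
  show "subspaceK (TT ` (Hp Ys k \<inter> PhiX0 Ys))"
  proof (rule subK_TT)
    show "0 \<in> Hp Ys k \<inter> PhiX0 Ys" using PhiX0_0[OF rep] by (simp add: Hp_Phi)
    fix \<eta> \<mu> assume "\<eta> \<in> Hp Ys k \<inter> PhiX0 Ys" "\<mu> \<in> Hp Ys k \<inter> PhiX0 Ys"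
    then show "\<eta> + \<mu> \<in> Hp Ys k \<inter> PhiX0 Ys" using PhiX0_add[OF rep] by (simp add: Hp_Phi)
  next
    fix c \<eta> assume "\<eta> \<in> Hp Ys k \<inter> PhiX0 Ys"
    then show "(\<lambda>i. sc c (\<eta> i)) \<in> Hp Ys k \<inter> PhiX0 Ys" using PhiX0_sc[OF rep]
      by (simp add: Hp_Phi sc_def fun_eq_iff)
  qed
  show "subspaceK (TT ` (Gp Xs Ys k \<inter> PhiX0 Ys))"
  proof (rule subK_TT)
    show "0 \<in> Gp Xs Ys k \<inter> PhiX0 Ys" using PhiX0_0[OF rep] subK_0[OF Ys_sub(3)[OF rep]] by (simp add: Gp_Phi)
    fix \<eta> \<mu> assume "\<eta> \<in> Gp Xs Ys k \<inter> PhiX0 Ys" "\<mu> \<in> Gp Xs Ys k \<inter> PhiX0 Ys"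
    then show "\<eta> + \<mu> \<in> Gp Xs Ys k \<inter> PhiX0 Ys" using PhiX0_add[OF rep] subK_add[OF Ys_sub(3)[OF rep]]
      by (simp add: Gp_Phi)
  next
    fix c \<eta> assume "\<eta> \<in> Gp Xs Ys k \<inter> PhiX0 Ys"
    then show "(\<lambda>i. sc c (\<eta> i)) \<in> Gp Xs Ys k \<inter> PhiX0 Ys" using PhiX0_sc[OF rep] subK_sc[OF Ys_sub(3)[OF rep]]
      by (simp add: Gp_Phi)
  qed
  show "TT ` (Hp Ys k \<inter> PhiX0 Ys) \<subseteq> TT ` (Gp Xs Ys k \<inter> PhiX0 Ys)"
    using subK_0[OF Ys_sub(3)[OF rep]] by (intro image_mono) (auto simp: Hp_Phi Gp_Phi)
  show "TT ` (Gp Xs Ys k \<inter> PhiX0 Ys) \<subseteq> TT ` PhiX0 Ys" by auto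
next
  obtain N where N: "\<forall>v\<in>X0. \<forall>n\<ge>N. v n = 0" using rep by (auto simp: is_rep_def findimK_def)
  have "\<forall>v\<in>TT ` PhiX0 Ys. \<forall>n\<ge>3 * N. v n = 0"
  proof (intro ballI allI impI)
    fix v n assume v: "v \<in> TT ` PhiX0 Ys" and n: "3 * N \<le> n"
    then obtain \<eta> where "\<eta> \<in> PhiX0 Ys" "v = TT \<eta>" by auto
    moreover have "N \<le> n div 3" using n by auto
    ultimately show "v n = 0" using N Ys_sub(2)[OF rep] unfolding TT_def PhiX0_iff by blast
  qed
  then show "findimK (TT ` PhiX0 Ys)" unfolding findimK_def by blast
qed

lemma PP_img: "(\<lambda>v. MM v k) ` (TT ` PhiX0 Ys) = PP Ys k"
  unfolding PP_def phiMap_def by (auto simp: image_image)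

lemma indec_R:
  assumes ind: "indecomposable X0 Xs Ys" and ne: "PhiX0 Ys \<noteq> {0}"
  shows "indecomposable (TT ` PhiX0 Ys) (\<lambda>k. TT ` (Hp Ys k \<inter> PhiX0 Ys)) (\<lambda>k. TT ` (Gp Xs Ys k \<inter> PhiX0 Ys))"
proof -
  define Q where "Q = TT ` PhiX0 Ys"
  define HXX where "HXX = (\<lambda>k. TT ` (Hp Ys k \<inter> PhiX0 Ys))"
  define GYY where "GYY = (\<lambda>k. TT ` (Gp Xs Ys k \<inter> PhiX0 Ys))"
  have repR: "is_rep Q HXX GYY" using rep_R unfolding Q_def HXX_def GYY_def .
  have Q: "subspaceK Q" using repR by (simp add: is_rep_def)
  have Qmem: "MM v \<in> PhiX0 Ys \<and> v = TT (MM v)" if "v \<in> Q" for v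
    using that unfolding Q_def by auto
  have Qne: "Q \<noteq> {0}"
  proof
    assume Q0: "Q = {0}"
    obtain \<eta> where "\<eta> \<in> PhiX0 Ys" "\<eta> \<noteq> 0" using ne PhiX0_0[OF rep] by blast
    then have "TT \<eta> \<in> Q" "MM (TT \<eta>) \<noteq> MM 0" using MM_0 unfolding Q_def by auto
    then show False using Q0 by auto
  qed
  have "\<not> (\<exists>X' X''. subspaceK X' \<and> subspaceK X'' \<and> X' \<noteq> {0} \<and> X'' \<noteq> {0} \<and>
          X' \<inter> X'' = {0} \<and> ssum X' X'' = Q \<and>
          (\<forall>a. evalL Q HXX GYY a = ssum (evalL Q HXX GYY a \<inter> X') (evalL Q HXX GYY a \<inter> X'')))"
  proof
    assume "\<exists>X' X''. subspaceK X' \<and> subspaceK X'' \<and> X' \<noteq> {0} \<and> X'' \<noteq> {0} \<and>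
          X' \<inter> X'' = {0} \<and> ssum X' X'' = Q \<and>
          (\<forall>a. evalL Q HXX GYY a = ssum (evalL Q HXX GYY a \<inter> X') (evalL Q HXX GYY a \<inter> X''))"
    then obtain X' X'' where X': "subspaceK X'" and X'': "subspaceK X''" and X'ne: "X' \<noteq> {0}"
      and X''ne: "X'' \<noteq> {0}" and XX: "X' \<inter> X'' = {0}" and XQ: "ssum X' X'' = Q"
      and spl: "\<And>a. evalL Q HXX GYY a = ssum (evalL Q HXX GYY a \<inter> X') (evalL Q HXX GYY a \<inter> X'')"
      by blast
    have X'Q: "X' \<subseteq> Q" using XQ ssum_sup1[OF subK_0[OF X'']] by auto
    have X''Q: "X'' \<subseteq> Q" using XQ ssum_sup2[OF subK_0[OF X']] by auto
    have splH: "HXX k = ssum (HXX k \<inter> X') (HXX k \<inter> X'')" for k using spl[of "GX k"] by simp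
    have splG: "GYY k = ssum (GYY k \<inter> X') (GYY k \<inter> X'')" for k using spl[of "GY k"] by simp
    have gadd: "MM (a + b) k = MM a k + MM b k" for a b :: "nat \<Rightarrow> 'k" and k by (simp add: MM_add)
    have gsc: "MM (sc c a) k = sc c (MM a k)" for a c k by (rule MM_sc)
    have alpha: "MM a k = 0" if a: "a \<in> X'" and b: "b \<in> X''" and ab: "MM (a + b) k = 0" for a b k
    proof -
      have "a + b \<in> Q" using subK_add[OF Q] a b X'Q X''Q by auto
      then have m: "MM (a + b) \<in> Hp Ys k \<inter> PhiX0 Ys" "a + b = TT (MM (a + b))"
        using Qmem[of "a+b"] ab by (simp_all add: Hp_Phi)
      then have "a + b \<in> HXX k" unfolding HXX_def by (metis imageI)
      then have "a + b \<in> ssum (HXX k \<inter> X') (HXX k \<inter> X'')" by (subst (asm) splH[of k])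
      then obtain a' b' where a': "a' \<in> HXX k \<inter> X'" and b': "b' \<in> HXX k \<inter> X''" and e: "a + b = a' + b'"
        unfolding ssum_def by blast
      have "a = a'" using uniq_dec[OF X' X'' XX a _ b _ e] a' b' by blast
      then show ?thesis using a' unfolding HXX_def by (auto simp: Hp_Phi)
    qed
    have alpha': "MM a k = 0" if a: "a \<in> X'" and b: "b \<in> X''" and ab: "MM a k = MM b k" for a b k
    proof -
      have e: "MM (a + - b) k = 0" using ab by (simp add: MM_add MM_neg MM_diff)
      show ?thesis using alpha[OF a subK_neg[OF X'' b] e] .
    qed
    have alpha'': "MM b k = 0" if a: "a \<in> X'" and b: "b \<in> X''" and ab: "MM a k = MM b k" for a b k
      using alpha'[OF a b ab] ab by simp
    define F' where "F' = (\<lambda>k. (\<lambda>v. MM v k) ` X')"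
    define F'' where "F'' = (\<lambda>k. (\<lambda>v. MM v k) ` X'')"
    define A' where "A' = ssum (F' I1) (ssum (F' I2) (F' I3))"
    define B' where "B' = ssum (F'' I1) (ssum (F'' I2) (F'' I3))"
    have F'sub: "subspaceK (F' k)" for k unfolding F'_def by (rule subK_image[OF X' gadd gsc])
    have F''sub: "subspaceK (F'' k)" for k unfolding F''_def by (rule subK_image[OF X'' gadd gsc])
    have A': "subspaceK A'" unfolding A'_def by (intro subK_ssum F'sub)
    have B': "subspaceK B'" unfolding B'_def by (intro subK_ssum F''sub)
    have F'A: "F' k \<subseteq> A'" for k unfolding A'_def by (rule mem3) (auto intro: subK_0 F'sub)
    have F''B: "F'' k \<subseteq> B'" for k unfolding B'_def by (rule mem3) (auto intro: subK_0 F''sub)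
    have PPdec: "PP Ys k = ssum (F' k) (F'' k)" for k
      using PP_img[of k] ssum_image[of "\<lambda>v. MM v k" X' X'', OF gadd] XQ
      unfolding F'_def F''_def Q_def by simp
    have AB: "A' \<inter> B' = {0}"
    proof -
      have "A' \<inter> B' \<subseteq> {0}"
      proof
        fix w assume w: "w \<in> A' \<inter> B'"
        obtain c where c: "\<And>k. c k \<in> F' k" "w = c I1 + c I2 + c I3"
          using obtain3[of w F'] w unfolding A'_def by blast
        obtain d where d: "\<And>k. d k \<in> F'' k" "w = d I1 + d I2 + d I3"
          using obtain3[of w F''] w unfolding B'_def by blast
        have "\<forall>k. \<exists>a. a \<in> X' \<and> c k = MM a k" using c(1) unfolding F'_def by blast
        from choice[OF this] obtain a where a0: "\<forall>k. a k \<in> X' \<and> c k = MM (a k) k" by blast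
        then have a: "\<And>k. a k \<in> X'" "\<And>k. c k = MM (a k) k" by auto
        have "\<forall>k. \<exists>b. b \<in> X'' \<and> d k = MM b k" using d(1) unfolding F''_def by blast
        from choice[OF this] obtain b where b0: "\<forall>k. b k \<in> X'' \<and> d k = MM (b k) k" by blast
        then have b: "\<And>k. b k \<in> X''" "\<And>k. d k = MM (b k) k" by auto
        define \<tau> where "\<tau> = (\<lambda>k. c k - d k)"
        have inY: "MM v k \<in> Ys k" if "v \<in> Q" for v k using Qmem[OF that] by (simp add: PhiX0_iff)
        have "\<tau> \<in> PhiX0 Ys" unfolding PhiX0_iff
        proof
          show "\<forall>i. \<tau> i \<in> Ys i" unfolding \<tau>_def
          proof
            fix i
            have "a i \<in> Q" "b i \<in> Q" using a(1) b(1) X'Q X''Q by blast+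
            then have "MM (a i) i \<in> Ys i" "MM (b i) i \<in> Ys i" using inY by blast+
            then show "c i - d i \<in> Ys i" using a(2) b(2) subK_diff[OF Ys_sub(1)[OF rep]] by simp
          qed
          show "\<tau> I1 + \<tau> I2 + \<tau> I3 = 0" unfolding \<tau>_def using c(2) d(2) by (simp add: algebra_simps)
        qed
        then have "TT \<tau> \<in> Q" unfolding Q_def by auto
        then obtain \<alpha> \<beta> where \<alpha>: "\<alpha> \<in> X'" and \<beta>: "\<beta> \<in> X''" and ab: "TT \<tau> = \<alpha> + \<beta>"
          using XQ by (auto elim!: ssumE)
        have eq: "MM \<alpha> k = c k" for k
        proof -
          have "\<tau> k = MM \<alpha> k + MM \<beta> k" using arg_cong[OF ab, of MM] by (simp add: MM_add)
          then have "MM (\<alpha> - a k) k = MM (- \<beta> - b k) k"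
            using a(2)[of k] b(2)[of k] unfolding \<tau>_def by (simp add: MM_diff MM_neg algebra_simps)
          moreover have "\<alpha> - a k \<in> X'" using subK_diff[OF X' \<alpha> a(1)] .
          moreover have "- \<beta> - b k \<in> X''" using subK_diff[OF X'' subK_neg[OF X'' \<beta>] b(1)] .
          ultimately have "MM (\<alpha> - a k) k = 0" using alpha' by blast
          then show ?thesis using a(2)[of k] by (simp add: MM_diff)
        qed
        have "MM \<alpha> \<in> PhiX0 Ys" using Qmem \<alpha> X'Q by blast
        then have "MM \<alpha> I1 + MM \<alpha> I2 + MM \<alpha> I3 = 0" by (simp add: PhiX0_iff)
        then show "w \<in> {0}" using c(2) eq by simp
      qed
      then show ?thesis using subK_0[OF A'] subK_0[OF B'] by auto
    qed
    have Yeq: "Ys k = PP Ys k" for k using dichotomy(2)[OF rep ind ne] .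
    have ABX: "ssum A' B' = X0"
    proof -
      have "X0 = WW Ys" using dichotomy(1)[OF rep ind ne] by simp
      also have "... = ssum (ssum (F' I1) (F'' I1)) (ssum (ssum (F' I2) (F'' I2)) (ssum (F' I3) (F'' I3)))"
        unfolding WW_def PPdec ..
      also have "... = ssum A' B'" unfolding A'_def B'_def by (simp add: ssum_swap)
      finally show ?thesis by simp
    qed
    have PPsub: "PP Ys k \<subseteq> Ys k" for k using PP_sub[OF rep] .
    have F'PP: "F' k \<subseteq> PP Ys k" and F''PP: "F'' k \<subseteq> PP Ys k" for k
      using PPdec[of k] ssum_sup1[OF subK_0[OF F''sub]] ssum_sup2[OF subK_0[OF F'sub]] by auto
    have sY: "splitsK A' B' (Ys k)" for k
    proof -
      have "Ys k = ssum (F' k) (F'' k)" using Yeq PPdec by simp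
      also have "... \<subseteq> ssum (Ys k \<inter> A') (Ys k \<inter> B')"
        using F'A F''B F'PP F''PP Yeq by (intro ssum_mono) blast+
      finally show ?thesis unfolding splitsK_def .
    qed
    have sX: "splitsK A' B' (Xs k)" for k
      unfolding splitsK_def
    proof
      fix x assume x: "x \<in> Xs k"
      then have "x \<in> PP Ys k" using Ys_sub(4)[OF rep] Yeq by blast
      then obtain \<eta> where \<eta>: "\<eta> \<in> PhiX0 Ys" "x = \<eta> k" unfolding PP_def phiMap_def by auto
      have "TT \<eta> \<in> GYY k" unfolding GYY_def using \<eta> x by (auto simp: Gp_Phi)
      then have "TT \<eta> \<in> ssum (GYY k \<inter> X') (GYY k \<inter> X'')" by (subst (asm) splG[of k])
      then obtain a b where a: "a \<in> GYY k \<inter> X'" and b: "b \<in> GYY k \<inter> X''" and e: "TT \<eta> = a + b"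
        unfolding ssum_def by blast
      have "x = MM a k + MM b k" using arg_cong[OF e, of MM] \<eta>(2) by (simp add: MM_add)
      moreover have "MM a k \<in> Xs k \<inter> A'" using a F'A unfolding GYY_def F'_def by (auto simp: Gp_Phi)
      moreover have "MM b k \<in> Xs k \<inter> B'" using b F''B unfolding GYY_def F''_def by (auto simp: Gp_Phi)
      ultimately show "x \<in> ssum (Xs k \<inter> A') (Xs k \<inter> B')" by (simp add: in_ssum)
    qed
    from indec_split[OF ind A' B' AB ABX sX sY]
    have "A' = {0} \<or> B' = {0}" .
    moreover have "A' \<noteq> {0}"
    proof
      assume A0: "A' = {0}"
      have "X' \<subseteq> {0}"
      proof
        fix v assume v: "v \<in> X'"
        have "MM v k = 0" for k using F'A[of k] A0 v unfolding F'_def by auto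
        then have "MM v = 0" by (simp add: fun_eq_iff)
        then have "v = TT 0" using Qmem[of v] v X'Q by auto
        then show "v \<in> {0}" by (simp add: TT_0)
      qed
      then show False using X'ne subK_0[OF X'] by auto
    qed
    moreover have "B' \<noteq> {0}"
    proof
      assume B0: "B' = {0}"
      have "X'' \<subseteq> {0}"
      proof
        fix v assume v: "v \<in> X''"
        have "MM v k = 0" for k using F''B[of k] B0 v unfolding F''_def by auto
        then have "MM v = 0" by (simp add: fun_eq_iff)
        then have "v = TT 0" using Qmem[of v] v X''Q by auto
        then show "v \<in> {0}" by (simp add: TT_0)
      qed
      then show False using X''ne subK_0[OF X''] by auto
    qed
    ultimately show False by simp
  qed
  then show ?thesis using repR Qne unfolding indecomposable_def Q_def HXX_def GYY_def by simp
qed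

end

theorem mainTheorem14:
  fixes z u :: lterm and i j :: idx
  assumes "perfect TYPE('k::field) z"
    and "i \<noteq> j"
    and "\<forall>(X0::(nat \<Rightarrow> 'k) set) Xs Ys. indecomposable X0 Xs Ys \<longrightarrow>
           ssum (phiMap i (evalPhiPlus Xs Ys z)) (phiMap j (evalPhiPlus Xs Ys z)) = evalL X0 Xs Ys u"
  shows "perfect TYPE('k) u"
  unfolding perfect_def
proof (intro allI impI)
  fix X0 :: "(nat \<Rightarrow> 'k) set" and Xs Ys
  assume ind: "indecomposable X0 Xs Ys"
  have rep: "is_rep X0 Xs Ys" using ind by (simp add: indecomposable_def)
  define S where "S = evalPhiPlus Xs Ys z"
  let ?R = "evalL (TT ` PhiX0 Ys) (\<lambda>k. TT ` (Hp Ys k \<inter> PhiX0 Ys)) (\<lambda>k. TT ` (Gp Xs Ys k \<inter> PhiX0 Ys)) z"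
  have RS: "?R = TT ` S" unfolding S_def by (rule evalR)
  have SR: "S = MM ` ?R" using RS by (simp add: image_image)
  have Rsub: "subspaceK ?R \<and> ?R \<subseteq> TT ` PhiX0 Ys" using evalL_sub[OF rep_R[OF rep]] .
  have u: "evalL X0 Xs Ys u = ssum (phiMap i S) (phiMap j S)" using assms(3) ind S_def by simp
  have "S = {0} \<or> S = PhiX0 Ys"
  proof (cases "PhiX0 Ys = {0}")
    case True
    then have "?R = {0}" using Rsub subK_0[of ?R] TT_0 by auto
    then show ?thesis using SR MM_0 by auto
  next
    case False
    have "?R = {0} \<or> ?R = TT ` PhiX0 Ys"
      using assms(1) indec_R[OF rep ind False] unfolding perfect_def by blast
    then show ?thesis using SR MM_0 by (auto simp: image_image)
  qed
  then show "evalL X0 Xs Ys u = {0} \<or> evalL X0 Xs Ys u = X0"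
  proof
    assume "S = {0}"
    then show ?thesis using u by (simp add: phiMap_def ssum_zero)
  next
    assume S: "S = PhiX0 Ys"
    show ?thesis
    proof (cases "PhiX0 Ys = {0}")
      case True
      then show ?thesis using u S by (simp add: phiMap_def ssum_zero)
    next
      case False
      then have "ssum (PP Ys i) (PP Ys j) = X0" using X0_pair[OF rep ind False assms(2)] by simp
      then show ?thesis using u S by (simp add: PP_def)
    qed
  qed
qed

end
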